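(* Let $\Upsilon$ be a tree and let $\|\cdot\|$ be an equivalent norm on $C_0(\Upsilon)$ with the Kadec property. Then the associated function $\mu:\Upsilon\to\mathbb{R}$, $\mu(t)=\inf\{\|\mathbf{1}_{(0,t]}+f'\|: f'\in C_0(\Upsilon),\ \operatorname{supp}f'\subseteq(t,\infty)\}$, has no bad points.
   Context: A tree is a partially ordered set $(\Upsilon,\preceq)$ such that for each $t$ the set $(0,t]=\{s:s\preceq t\}$ is well-ordered; write $(0,t)=\{s:s\prec t\}$, $(t,\infty)=\{u:t\prec u\}$, and let $r(t)$ be the order type of $(0,t)$. Trees are assumed Hausdorff: if $r(t)$ is a limit ordinal and $(0,t)=(0,t')$ then $t=t'$. $\Upsilon$ carries the coarsest topology in which every $(0,t]$ is open and closed, and $C_0(\Upsilon)$ is the space of continuous $f:\Upsilon\to\mathbb{R}$ with $\{|f|\ge\epsilon\}$ compact for every $\epsilon>0$, with the supremum norm; $\mathbf{1}_{(0,t]}$ is the indicator function and $\operatorname{supp}f=\{s:f(s)\ne0\}$. The set $t^+$ of immediate successors of $t$ consists of those $u$ with $(0,u)=(0,t]$. The function $\mu$ is increasing. For an increasing $\rho$, $t$ is good for $\rho$ if there is a finite $F\subseteq t^+$ with $\inf_{u\in t^+\setminus F}\rho(u)>\rho(t)$ (infimum over the empty set $=+\infty$); otherwise bad. A norm has the Kadec property if the weak and norm topologies coincide on its unit sphere. *)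

theory Defs
  imports "HOL-Analysis.Analysis" "HOL-Library.Extended_Real"
begin

definition lt_of :: "('a \<Rightarrow> 'a \<Rightarrow> bool) \<Rightarrow> 'a \<Rightarrow> 'a \<Rightarrow> bool" where
  "lt_of le s t \<longleftrightarrow> le s t \<and> s \<noteq> t"

definition is_tree :: "('a \<Rightarrow> 'a \<Rightarrow> bool) \<Rightarrow> bool" where
  "is_tree le \<longleftrightarrow>
     (\<forall>x. le x x) \<and> (\<forall>x y. le x y \<and> le y x \<longrightarrow> x = y) \<and>
     (\<forall>x y z. le x y \<and> le y z \<longrightarrow> le x z) \<and>
     \<comment> \<open>each (0,t] is well-ordered: a chain in which every nonempty subset has a least element\<close>
     (\<forall>t. (\<forall>a b. le a t \<and> le b t \<longrightarrow> le a b \<or> le b a) \<and>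
          (\<forall>A. A \<subseteq> {s. le s t} \<and> A \<noteq> {} \<longrightarrow> (\<exists>m\<in>A. \<forall>a\<in>A. le m a)))"

text \<open>r(t) is a limit ordinal: (0,t) is nonempty and has no greatest element.\<close>
definition limit_height :: "('a \<Rightarrow> 'a \<Rightarrow> bool) \<Rightarrow> 'a \<Rightarrow> bool" where
  "limit_height le t \<longleftrightarrow> {s. lt_of le s t} \<noteq> {} \<and>
     \<not> (\<exists>m. lt_of le m t \<and> (\<forall>s. lt_of le s t \<longrightarrow> le s m))"

definition hausdorff_tree :: "('a \<Rightarrow> 'a \<Rightarrow> bool) \<Rightarrow> bool" where
  "hausdorff_tree le \<longleftrightarrow> is_tree le \<and>
     (\<forall>t t'. limit_height le t \<and> {s. lt_of le s t} = {s. lt_of le s t'} \<longrightarrow> t = t')"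

definition tree_topology :: "('a \<Rightarrow> 'a \<Rightarrow> bool) \<Rightarrow> 'a topology" where
  "tree_topology le = topology_generated_by
     ({{s. le s t} | t. True} \<union> {- {s. le s t} | t. True})"

definition C0 :: "('a \<Rightarrow> 'a \<Rightarrow> bool) \<Rightarrow> ('a \<Rightarrow> real) set" where
  "C0 le = {f. continuous_map (tree_topology le) euclideanreal f \<and>
              (\<forall>\<epsilon>>0. compactin (tree_topology le) {s. \<epsilon> \<le> \<bar>f s\<bar>})}"

definition sup_norm :: "('a \<Rightarrow> real) \<Rightarrow> real" where
  "sup_norm f = (SUP s. \<bar>f s\<bar>)"

definition equivalent_norm :: "('a \<Rightarrow> 'a \<Rightarrow> bool) \<Rightarrow> (('a \<Rightarrow> real) \<Rightarrow> real) \<Rightarrow> bool" where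
  "equivalent_norm le N \<longleftrightarrow>
     (\<forall>f\<in>C0 le. 0 \<le> N f \<and> (N f = 0 \<longleftrightarrow> f = (\<lambda>_. 0))) \<and>
     (\<forall>f\<in>C0 le. \<forall>c. N (\<lambda>s. c * f s) = \<bar>c\<bar> * N f) \<and>
     (\<forall>f\<in>C0 le. \<forall>g\<in>C0 le. N (\<lambda>s. f s + g s) \<le> N f + N g) \<and>
     (\<exists>c C. 0 < c \<and> (\<forall>f\<in>C0 le. c * sup_norm f \<le> N f \<and> N f \<le> C * sup_norm f))"

definition norm_topology :: "('a \<Rightarrow> 'a \<Rightarrow> bool) \<Rightarrow> (('a \<Rightarrow> real) \<Rightarrow> real) \<Rightarrow> ('a \<Rightarrow> real) topology" where
  "norm_topology le N = topology_generated_by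
     {{g \<in> C0 le. N (\<lambda>s. g s - f s) < r} | f r. f \<in> C0 le \<and> 0 < r}"

definition dual_space :: "('a \<Rightarrow> 'a \<Rightarrow> bool) \<Rightarrow> (('a \<Rightarrow> real) \<Rightarrow> real) \<Rightarrow> (('a \<Rightarrow> real) \<Rightarrow> real) set" where
  "dual_space le N = {\<phi>.
     (\<forall>f\<in>C0 le. \<forall>g\<in>C0 le. \<forall>a b. \<phi> (\<lambda>s. a * f s + b * g s) = a * \<phi> f + b * \<phi> g) \<and>
     (\<exists>K. \<forall>f\<in>C0 le. \<bar>\<phi> f\<bar> \<le> K * N f)}"

definition weak_topology :: "('a \<Rightarrow> 'a \<Rightarrow> bool) \<Rightarrow> (('a \<Rightarrow> real) \<Rightarrow> real) \<Rightarrow> ('a \<Rightarrow> real) topology" where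
  "weak_topology le N = topology_generated_by
     {{g \<in> C0 le. \<phi> g \<in> U} | \<phi> U. \<phi> \<in> dual_space le N \<and> open U}"

definition kadec :: "('a \<Rightarrow> 'a \<Rightarrow> bool) \<Rightarrow> (('a \<Rightarrow> real) \<Rightarrow> real) \<Rightarrow> bool" where
  "kadec le N \<longleftrightarrow>
     subtopology (weak_topology le N) {f \<in> C0 le. N f = 1} =
     subtopology (norm_topology le N) {f \<in> C0 le. N f = 1}"

definition mu :: "('a \<Rightarrow> 'a \<Rightarrow> bool) \<Rightarrow> (('a \<Rightarrow> real) \<Rightarrow> real) \<Rightarrow> 'a \<Rightarrow> real" where
  "mu le N t = Inf {N (\<lambda>s. (if le s t then 1 else 0) + f' s) | f'.
       f' \<in> C0 le \<and> {s. f' s \<noteq> 0} \<subseteq> {u. lt_of le t u}}"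

definition succs :: "('a \<Rightarrow> 'a \<Rightarrow> bool) \<Rightarrow> 'a \<Rightarrow> 'a set" where
  "succs le t = {u. {s. lt_of le s u} = {s. le s t}}"

definition good_point :: "('a \<Rightarrow> 'a \<Rightarrow> bool) \<Rightarrow> ('a \<Rightarrow> real) \<Rightarrow> 'a \<Rightarrow> bool" where
  "good_point le \<rho> t \<longleftrightarrow> (\<exists>F. finite F \<and> F \<subseteq> succs le t \<and>
      (INF u\<in>succs le t - F. ereal (\<rho> u)) > ereal (\<rho> t))"

definition bad_point :: "('a \<Rightarrow> 'a \<Rightarrow> bool) \<Rightarrow> ('a \<Rightarrow> real) \<Rightarrow> 'a \<Rightarrow> bool" where
  "bad_point le \<rho> t \<longleftrightarrow> \<not> good_point le \<rho> t"

end

theory Submission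
  imports Defs
begin


lemma tt_topspace[simp]: "topspace (tree_topology le) = UNIV"
  unfolding tree_topology_def by auto

lemma tt_open_down: "openin (tree_topology le) {s. le s t}"
  unfolding tree_topology_def by (rule topology_generated_by_Basis) auto

lemma tt_open_compl: "openin (tree_topology le) (- {s. le s t})"
  unfolding tree_topology_def by (rule topology_generated_by_Basis) auto

lemma ind_cont: "continuous_map (tree_topology le) euclideanreal (\<lambda>s. if le s t then (1::real) else 0)"
  unfolding continuous_map_def
proof (intro conjI allI impI)
  fix U :: "real set" assume "openin euclideanreal U"
  have eq: "{x \<in> topspace (tree_topology le). (if le x t then (1::real) else 0) \<in> U} =
    (if 1 \<in> U then {s. le s t} else {}) \<union> (if 0 \<in> U then - {s. le s t} else {})"
    by auto
  show "openin (tree_topology le) {x \<in> topspace (tree_topology le). (if le x t then (1::real) else 0) \<in> U}"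
    unfolding eq by (intro openin_Un) (auto simp: tt_open_down tt_open_compl)
qed auto

lemma gen_nbhd:
  assumes "generate_topology_on S W" "x \<in> W"
  shows "\<exists>F. finite F \<and> F \<subseteq> S \<and> x \<in> \<Inter>F \<and> \<Inter>F \<subseteq> W"
  using assms
proof (induction arbitrary: x)
  case Empty then show ?case by simp
next
  case (Int a b)
  from Int.prems have "x \<in> a" "x \<in> b" by auto
  obtain F1 where F1: "finite F1" "F1 \<subseteq> S" "x \<in> \<Inter>F1" "\<Inter>F1 \<subseteq> a" using Int.IH(1)[OF \<open>x \<in> a\<close>] by blast
  obtain F2 where F2: "finite F2" "F2 \<subseteq> S" "x \<in> \<Inter>F2" "\<Inter>F2 \<subseteq> b" using Int.IH(2)[OF \<open>x \<in> b\<close>] by blast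
  have "finite (F1 \<union> F2)" "F1 \<union> F2 \<subseteq> S" "x \<in> \<Inter>(F1 \<union> F2)" "\<Inter>(F1 \<union> F2) \<subseteq> a \<inter> b"
    using F1 F2 by auto
  then show ?case by blast
next
  case (UN K)
  then obtain k where k: "k \<in> K" "x \<in> k" by auto
  obtain F where F: "finite F" "F \<subseteq> S" "x \<in> \<Inter>F" "\<Inter>F \<subseteq> k" using UN.IH[OF k] by blast
  have "\<Inter>F \<subseteq> \<Union>K" using F(4) k(1) by auto
  then show ?case using F by blast
next
  case (Basis s)
  have "finite {s}" "{s} \<subseteq> S" "x \<in> \<Inter>{s}" "\<Inter>{s} \<subseteq> s" using Basis by auto
  then show ?case by blast
qed

context
  fixes le :: "'a \<Rightarrow> 'a \<Rightarrow> bool"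
  assumes HT: "hausdorff_tree le"
begin

lemma T_all: "is_tree le" using HT unfolding hausdorff_tree_def by simp
lemma T_refl: "le x x" using T_all unfolding is_tree_def by simp
lemma T_antisym: "le x y \<Longrightarrow> le y x \<Longrightarrow> x = y"
proof -
  have "\<forall>x y. le x y \<and> le y x \<longrightarrow> x = y" using T_all[unfolded is_tree_def, THEN conjunct2, THEN conjunct1] .
  then show "le x y \<Longrightarrow> le y x \<Longrightarrow> x = y" by simp
qed
lemma T_trans: "le x y \<Longrightarrow> le y z \<Longrightarrow> le x z"
proof -
  have "\<forall>x y z. le x y \<and> le y z \<longrightarrow> le x z" using T_all[unfolded is_tree_def, THEN conjunct2, THEN conjunct2, THEN conjunct1] .
  then show "le x y \<Longrightarrow> le y z \<Longrightarrow> le x z" by blast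
qed
lemma T_chain: "le a t \<Longrightarrow> le b t \<Longrightarrow> le a b \<or> le b a"
proof -
  have "\<forall>t. (\<forall>a b. le a t \<and> le b t \<longrightarrow> le a b \<or> le b a)" using T_all[unfolded is_tree_def, THEN conjunct2, THEN conjunct2, THEN conjunct2] by blast
  then show "le a t \<Longrightarrow> le b t \<Longrightarrow> le a b \<or> le b a" by blast
qed
lemma T_wo: "A \<subseteq> {s. le s t} \<Longrightarrow> A \<noteq> {} \<Longrightarrow> \<exists>m\<in>A. \<forall>a\<in>A. le m a"
proof -
  have "\<forall>t. (\<forall>A. A \<subseteq> {s. le s t} \<and> A \<noteq> {} \<longrightarrow> (\<exists>m\<in>A. \<forall>a\<in>A. le m a))" using T_all[unfolded is_tree_def, THEN conjunct2, THEN conjunct2, THEN conjunct2] by blast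
  then show "A \<subseteq> {s. le s t} \<Longrightarrow> A \<noteq> {} \<Longrightarrow> \<exists>m\<in>A. \<forall>a\<in>A. le m a" by blast
qed
lemma T_haus: "limit_height le t \<Longrightarrow> {s. lt_of le s t} = {s. lt_of le s t'} \<Longrightarrow> t = t'"
proof -
  have "\<forall>t t'. limit_height le t \<and> {s. lt_of le s t} = {s. lt_of le s t'} \<longrightarrow> t = t'"
    using HT[unfolded hausdorff_tree_def, THEN conjunct2] .
  then show "limit_height le t \<Longrightarrow> {s. lt_of le s t} = {s. lt_of le s t'} \<Longrightarrow> t = t'" by blast
qed

lemma finite_chain_max:
  assumes "finite F" "F \<noteq> {}" "F \<subseteq> {s. le s r}"
  shows "\<exists>m\<in>F. \<forall>x\<in>F. le x m"
  using assms
proof (induction F rule: finite_ne_induct)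
  case (singleton x) then show ?case by (auto simp: T_refl)
next
  case (insert x F)
  then obtain m where m: "m \<in> F" "\<forall>y\<in>F. le y m" by auto
  have "le x r" "le m r" using insert m by auto
  then have "le x m \<or> le m x" using T_chain by blast
  then show ?case
  proof
    assume "le x m" then show ?thesis using m by (auto simp: T_refl)
  next
    assume "le m x" then show ?thesis using m T_trans[of _ m x] by (auto simp: T_refl)
  qed
qed

lemma down_compact: "compactin (tree_topology le) {s. le s t}"
  unfolding compactin_def
proof (intro conjI allI impI)
  fix \<U> assume \<U>: "(\<forall>U\<in>\<U>. openin (tree_topology le) U) \<and> {s. le s t} \<subseteq> \<Union>\<U>"
  define G where "G = {r. le r t \<and> (\<exists>F. finite F \<and> F \<subseteq> \<U> \<and> {s. le s r} \<subseteq> \<Union>F)}"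
  have "t \<in> G"
  proof (rule ccontr)
    assume "t \<notin> G"
    then have "{r. le r t} - G \<noteq> {}" using T_refl by auto
    then obtain r0 where r0: "r0 \<in> {r. le r t} - G" and r0min: "\<forall>a\<in>{r. le r t} - G. le r0 a"
      using T_wo[of "{r. le r t} - G" t] by blast
    obtain U where U: "U \<in> \<U>" "r0 \<in> U" using r0 \<U> by blast
    define Sb where "Sb = {{s. le s t} | t. True} \<union> {- {s. le s t} | t. True}"
    have "openin (tree_topology le) U" using \<U> U(1) by blast
    then have "generate_topology_on Sb U" unfolding tree_topology_def Sb_def by (rule openin_topology_generated_by)
    then have "\<exists>B. finite B \<and> B \<subseteq> Sb \<and> r0 \<in> \<Inter>B \<and> \<Inter>B \<subseteq> U" using U(2) by (rule gen_nbhd)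
    then obtain B where B: "finite B" "B \<subseteq> Sb" "r0 \<in> \<Inter>B" "\<Inter>B \<subseteq> U" by blast
    define E where "E = {p. lt_of le p r0 \<and> p \<notin> \<Inter>B}"
    define Ss where "Ss = (\<lambda>s. - {x. le x s}) -` B"
    have notB: "q \<notin> \<Inter>B" if "s \<in> Ss" "le q s" for q s
    proof -
      have "- {x. le x s} \<in> B" using that(1) unfolding Ss_def by simp
      moreover have "q \<notin> - {x. le x s}" using that(2) by simp
      ultimately show ?thesis by blast
    qed
    have E1: "\<exists>s\<in>Ss. le p s" if "p \<in> E" for p
    proof -
      from that obtain b where b: "b \<in> B" "p \<notin> b" unfolding E_def by auto
      from b B(2) obtain s where "b = {x. le x s} \<or> b = - {x. le x s}" unfolding Sb_def by auto
      then show ?thesis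
      proof
        assume "b = {x. le x s}"
        then have "le r0 s" using B(3) b by auto
        moreover have "le p r0" using that unfolding E_def lt_of_def by auto
        ultimately have "le p s" using T_trans[of p r0 s] by simp
        then show ?thesis using b \<open>b = {x. le x s}\<close> by simp
      next
        assume "b = - {x. le x s}"
        then show ?thesis using b unfolding Ss_def by auto
      qed
    qed
    have E2: "q \<in> E" if pq: "p \<in> E" "le q p" for p q
    proof -
      obtain s where s: "s \<in> Ss" "le p s" using E1 pq by blast
      have "le q s" using T_trans[OF pq(2) s(2)] .
      then have qB: "q \<notin> \<Inter>B" using notB s(1) by blast
      have "le p r0" using pq(1) unfolding E_def lt_of_def by simp
      then have "le q r0" using T_trans[OF pq(2)] by simp
      moreover have "q \<noteq> r0" using qB B(3) by auto
      ultimately show ?thesis using qB unfolding E_def lt_of_def by auto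
    qed
    have Er0: "E \<subseteq> {s. le s r0}" unfolding E_def lt_of_def by auto
    have "finite Ss" unfolding Ss_def
    proof (rule finite_vimageI[OF B(1)])
      show "inj (\<lambda>s. - {x. le x s})"
      proof (rule injI)
        fix x y assume "- {xa. le xa x} = - {x. le x y}"
        then have "{xa. le xa x} = {x. le x y}" by simp
        then have "le x y" "le y x" using T_refl[of x] T_refl[of y] by (simp_all add: set_eq_iff)
        then show "x = y" by (rule T_antisym)
      qed
    qed
    have key: "E = {} \<or> (\<exists>pm\<in>E. \<forall>p\<in>E. le p pm)"
    proof (rule ccontr)
      assume "\<not> ?thesis"
      then have Ene: "E \<noteq> {}" and nomax: "\<And>pm. pm \<in> E \<Longrightarrow> \<exists>p\<in>E. \<not> le p pm" by auto
      have "\<exists>s\<in>Ss. E \<subseteq> {x. le x s}"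
      proof (rule ccontr)
        assume "\<not> ?thesis"
        then have "\<forall>s\<in>Ss. \<exists>e\<in>E. \<not> le e s" by blast
        then obtain e where e: "\<And>s. s \<in> Ss \<Longrightarrow> e s \<in> E \<and> \<not> le (e s) s" by metis
        have below: "\<exists>s\<in>Ss. le p (e s)" if pE0: "p \<in> E" for p
        proof -
          obtain s where s: "s \<in> Ss" "le p s" using E1 pE0 by blast
          have "le p (e s) \<or> le (e s) p" using T_chain[of p r0 "e s"] pE0 e[OF s(1)] Er0 by auto
          moreover have "\<not> le (e s) p" using T_trans[of "e s" p s] s e[OF s(1)] by blast
          ultimately show ?thesis using s by blast
        qed
        obtain p0 where "p0 \<in> E" using Ene by auto
        then have "Ss \<noteq> {}" using E1 by blast
        have "finite (e ` Ss)" "e ` Ss \<noteq> {}" "e ` Ss \<subseteq> {s. le s r0}"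
          using \<open>finite Ss\<close> \<open>Ss \<noteq> {}\<close> e Er0 by auto
        then obtain pm where pm: "pm \<in> e ` Ss" "\<forall>x\<in>e ` Ss. le x pm"
          using finite_chain_max by blast
        have "pm \<in> E" using pm e by auto
        moreover have "\<forall>p\<in>E. le p pm"
        proof
          fix p assume "p \<in> E"
          then obtain s where "s \<in> Ss" "le p (e s)" using below by blast
          moreover have "le (e s) pm" using pm \<open>s \<in> Ss\<close> by blast
          ultimately show "le p pm" using T_trans[of p "e s" pm] by simp
        qed
        ultimately show False using nomax by blast
      qed
      then obtain s where s: "s \<in> Ss" "E \<subseteq> {x. le x s}" by blast
      have "r0 \<in> {s. le s r0} - E" unfolding E_def lt_of_def by (auto simp: T_refl)
      then obtain q where q: "q \<in> {s. le s r0} - E" and qmin: "\<forall>a\<in>{s. le s r0} - E. le q a"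
        using T_wo[of "{s. le s r0} - E" r0] by blast
      have sE: "s \<notin> E"
      proof
        assume "s \<in> E"
        then obtain p where "p \<in> E" "\<not> le p s" using nomax by blast
        then show False using s by auto
      qed
      then obtain v where v: "v \<in> {x. le x s} - E" and vmin: "\<forall>a\<in>{x. le x s} - E. le v a"
        using T_wo[of "{x. le x s} - E" s] T_refl by blast
      have qE: "{p. lt_of le p q} = E"
      proof (intro equalityI subsetI)
        fix p assume "p \<in> {p. lt_of le p q}"
        then have p: "le p q" "p \<noteq> q" unfolding lt_of_def by auto
        have "le p r0" using p q T_trans[of p q r0] by simp
        show "p \<in> E"
        proof (rule ccontr)
          assume "p \<notin> E"
          then have "le q p" using qmin \<open>le p r0\<close> by blast
          then show False using p T_antisym[of p q] by simp
        qed
      next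
        fix p assume pE: "p \<in> E"
        have "le p q \<or> le q p" using T_chain[of p r0 q] pE Er0 q by auto
        moreover have "\<not> le q p" using E2[OF pE] q by blast
        ultimately show "p \<in> {p. lt_of le p q}" using q pE unfolding lt_of_def by auto
      qed
      have vE: "{p. lt_of le p v} = E"
      proof (intro equalityI subsetI)
        fix p assume "p \<in> {p. lt_of le p v}"
        then have p: "le p v" "p \<noteq> v" unfolding lt_of_def by auto
        have "le p s" using p v T_trans[of p v s] by simp
        show "p \<in> E"
        proof (rule ccontr)
          assume "p \<notin> E"
          then have "le v p" using vmin \<open>le p s\<close> by blast
          then show False using p T_antisym[of p v] by simp
        qed
      next
        fix p assume pE: "p \<in> E"
        have "le p v \<or> le v p" using T_chain[of p s v] pE s v by auto
        moreover have "\<not> le v p" using E2[OF pE] v by blast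
        ultimately show "p \<in> {p. lt_of le p v}" using v pE unfolding lt_of_def by auto
      qed
      have "limit_height le q"
        unfolding limit_height_def
      proof
        show "{s. lt_of le s q} \<noteq> {}" using qE Ene by simp
        show "\<not> (\<exists>m. lt_of le m q \<and> (\<forall>s. lt_of le s q \<longrightarrow> le s m))"
        proof
          assume "\<exists>m. lt_of le m q \<and> (\<forall>s. lt_of le s q \<longrightarrow> le s m)"
          then obtain m where "m \<in> E" "\<forall>p\<in>E. le p m" using qE by auto
          then show False using nomax by blast
        qed
      qed
      then have "q = v" using T_haus qE vE by simp
      then have "le q s" using v by simp
      then have qB: "q \<notin> \<Inter>B" using notB s(1) by blast
      then have "q \<noteq> r0" using B(3) by auto
      then have "q \<in> E" using qB q unfolding E_def lt_of_def by auto
      then show False using q by simp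
    qed
    have "r0 \<in> G"
    proof (cases "E = {}")
      case True
      have "{s. le s r0} \<subseteq> \<Union>{U}"
      proof
        fix x assume "x \<in> {s. le s r0}"
        then have "x \<in> \<Inter>B" using True B(3) unfolding E_def lt_of_def by (cases "x = r0") auto
        then show "x \<in> \<Union>{U}" using B(4) by auto
      qed
      then show ?thesis unfolding G_def using r0 U(1) by (intro CollectI conjI exI[of _ "{U}"]) auto
    next
      case False
      then obtain pm where pm: "pm \<in> E" "\<forall>p\<in>E. le p pm" using key by blast
      have pmr: "le pm r0" "pm \<noteq> r0" using pm unfolding E_def lt_of_def by auto
      have "le pm t" using pmr r0 T_trans[of pm r0 t] by simp
      moreover have "pm \<in> G"
      proof (rule ccontr)
        assume "pm \<notin> G"
        then have "le r0 pm" using r0min \<open>le pm t\<close> by blast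
        then show False using pmr T_antisym[of pm r0] by simp
      qed
      then obtain F where F: "finite F" "F \<subseteq> \<U>" "{s. le s pm} \<subseteq> \<Union>F" unfolding G_def by auto
      have "{s. le s r0} \<subseteq> \<Union>(insert U F)"
      proof
        fix x assume x: "x \<in> {s. le s r0}"
        show "x \<in> \<Union>(insert U F)"
        proof (cases "x \<in> \<Inter>B")
          case True then show ?thesis using B(4) by auto
        next
          case False
          then have "x \<noteq> r0" using B(3) by auto
          then have "x \<in> E" using x False unfolding E_def lt_of_def by auto
          then have "le x pm" using pm by auto
          then show ?thesis using F(3) by auto
        qed
      qed
      then show ?thesis unfolding G_def using r0 U(1) F by (intro CollectI conjI exI[of _ "insert U F"]) auto
    qed
    then show False using r0 by simp
  qed
  then show "\<exists>\<F>. finite \<F> \<and> \<F> \<subseteq> \<U> \<and> {s. le s t} \<subseteq> \<Union>\<F>" unfolding G_def using T_refl by auto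
qed simp

end


lemma C0_iff: "f \<in> C0 le \<longleftrightarrow> continuous_map (tree_topology le) euclideanreal f \<and>
   (\<forall>\<epsilon>>0. compactin (tree_topology le) {s. \<epsilon> \<le> \<bar>f s\<bar>})"
  by (simp add: C0_def)

lemma C0_zero: "(\<lambda>s. 0) \<in> C0 le"
  unfolding C0_iff by auto

lemma closed_abs_ge: "closedin (tree_topology le) {s. \<epsilon> \<le> \<bar>f s\<bar>}" if "continuous_map (tree_topology le) euclideanreal f"
proof -
  have "closed {y::real. \<epsilon> \<le> \<bar>y\<bar>}" by (intro closed_Collect_le continuous_intros)
  then have "closedin euclideanreal {y::real. \<epsilon> \<le> \<bar>y\<bar>}" by simp
  from closedin_continuous_map_preimage[OF that this] show ?thesis by simp
qed

lemma C0_add: assumes "f \<in> C0 le" "g \<in> C0 le" shows "(\<lambda>s. f s + g s) \<in> C0 le"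
proof -
  have cf: "continuous_map (tree_topology le) euclideanreal f" and cg: "continuous_map (tree_topology le) euclideanreal g"
    using assms by (auto simp: C0_iff)
  have c: "continuous_map (tree_topology le) euclideanreal (\<lambda>s. f s + g s)"
    using continuous_map_add[OF cf cg] .
  have "compactin (tree_topology le) {s. \<epsilon> \<le> \<bar>f s + g s\<bar>}" if "\<epsilon> > 0" for \<epsilon>
  proof (rule closed_compactin)
    have Kf: "\<forall>\<delta>>0. compactin (tree_topology le) {s. \<delta> \<le> \<bar>f s\<bar>}"
      and Kg: "\<forall>\<delta>>0. compactin (tree_topology le) {s. \<delta> \<le> \<bar>g s\<bar>}" using assms by (simp_all add: C0_iff)
    have "\<epsilon>/2 > 0" using that by simp
    show "compactin (tree_topology le) ({s. \<epsilon>/2 \<le> \<bar>f s\<bar>} \<union> {s. \<epsilon>/2 \<le> \<bar>g s\<bar>})"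
      by (intro compactin_Un Kf[rule_format] Kg[rule_format] \<open>\<epsilon>/2 > 0\<close>)
    show "{s. \<epsilon> \<le> \<bar>f s + g s\<bar>} \<subseteq> {s. \<epsilon>/2 \<le> \<bar>f s\<bar>} \<union> {s. \<epsilon>/2 \<le> \<bar>g s\<bar>}" by auto
    show "closedin (tree_topology le) {s. \<epsilon> \<le> \<bar>f s + g s\<bar>}" using closed_abs_ge[OF c] by simp
  qed
  then show ?thesis using c by (simp add: C0_iff)
qed

lemma C0_scale: assumes "f \<in> C0 le" shows "(\<lambda>s. a * f s) \<in> C0 le"
proof (cases "a = 0")
  case True then show ?thesis using C0_zero by simp
next
  case False
  have cf: "continuous_map (tree_topology le) euclideanreal f" using assms by (auto simp: C0_iff)
  have "compactin (tree_topology le) {s. \<epsilon> \<le> \<bar>a * f s\<bar>}" if "\<epsilon> > 0" for \<epsilon>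
  proof -
    have "{s. \<epsilon> \<le> \<bar>a * f s\<bar>} = {s. \<epsilon> / \<bar>a\<bar> \<le> \<bar>f s\<bar>}"
      using False by (auto simp: abs_mult field_simps)
    moreover have "\<epsilon> / \<bar>a\<bar> > 0" using False that by simp
    ultimately show ?thesis using assms by (simp add: C0_iff)
  qed
  then show ?thesis using continuous_map_real_mult_left[OF cf] by (simp add: C0_iff)
qed

lemma C0_diff: assumes "f \<in> C0 le" "g \<in> C0 le" shows "(\<lambda>s. f s - g s) \<in> C0 le"
proof -
  have "(\<lambda>s. f s + (-1) * g s) \<in> C0 le" by (intro C0_add C0_scale assms)
  then show ?thesis by simp
qed

lemma C0_lin: assumes "f \<in> C0 le" "g \<in> C0 le" shows "(\<lambda>s. a * f s + b * g s) \<in> C0 le"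
  by (intro C0_add C0_scale assms)

lemma C0_sum: "finite I \<Longrightarrow> (\<forall>i\<in>I. h i \<in> C0 le) \<Longrightarrow> (\<lambda>s. \<Sum>i\<in>I. a i * h i s) \<in> C0 le"
proof (induction I rule: finite_induct)
  case empty then show ?case using C0_zero by simp
next
  case (insert j I)
  have "(\<lambda>s. a j * h j s + 1 * (\<Sum>i\<in>I. a i * h i s)) \<in> C0 le"
    using insert by (intro C0_lin) auto
  then show ?case using insert by simp
qed

lemma C0_bounded: assumes "f \<in> C0 le" shows "\<exists>B. \<forall>s. \<bar>f s\<bar> \<le> B"
proof -
  have cf: "continuous_map (tree_topology le) euclideanreal f"
    and K: "compactin (tree_topology le) {s. 1 \<le> \<bar>f s\<bar>}" using assms by (auto simp: C0_iff)
  have "compactin euclideanreal (f ` {s. 1 \<le> \<bar>f s\<bar>})" by (rule image_compactin[OF K cf])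
  then have "bounded (f ` {s. 1 \<le> \<bar>f s\<bar>})" by (simp add: compactin_euclidean_iff compact_imp_bounded)
  then obtain B where B: "\<forall>y\<in>f ` {s. 1 \<le> \<bar>f s\<bar>}. norm y \<le> B" by (auto simp: bounded_iff)
  have "\<bar>f s\<bar> \<le> max B 1" for s
  proof (cases "1 \<le> \<bar>f s\<bar>")
    case True then show ?thesis using B by fastforce
  next
    case False then show ?thesis by simp
  qed
  then show ?thesis by blast
qed

lemma sup_ge: assumes "f \<in> C0 le" shows "\<bar>f s\<bar> \<le> sup_norm f"
proof -
  obtain B where "\<forall>s. \<bar>f s\<bar> \<le> B" using C0_bounded[OF assms] by blast
  then have bdd: "bdd_above (range (\<lambda>s. \<bar>f s\<bar>))" by (auto intro: bdd_aboveI)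
  have "\<bar>f s\<bar> \<le> (SUP s. \<bar>f s\<bar>)" by (rule cSUP_upper[OF UNIV_I bdd])
  then show ?thesis unfolding sup_norm_def .
qed

lemma sup_le: assumes "\<And>s. \<bar>f s\<bar> \<le> B" shows "sup_norm f \<le> B"
  unfolding sup_norm_def by (rule cSUP_least) (use assms in auto)

lemma ind_C0: assumes "hausdorff_tree le" shows "(\<lambda>s. if le s t then 1 else 0) \<in> C0 le"
proof -
  have "compactin (tree_topology le) {s. \<epsilon> \<le> \<bar>(if le s t then 1 else 0::real)\<bar>}" if "\<epsilon> > 0" for \<epsilon>
  proof (cases "\<epsilon> \<le> 1")
    case True
    then have "{s. \<epsilon> \<le> \<bar>(if le s t then 1 else 0::real)\<bar>} = {s. le s t}" using that by auto
    then show ?thesis using down_compact[OF assms] by simp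
  next
    case False
    then have "{s. \<epsilon> \<le> \<bar>(if le s t then 1 else 0::real)\<bar>} = {}" by auto
    then show ?thesis by simp
  qed
  then show ?thesis using ind_cont by (simp add: C0_iff)
qed

lemma weak_eventually:
  assumes "generate_topology_on {{g \<in> C0 le. \<phi> g \<in> U} | \<phi> U. \<phi> \<in> dual_space le N \<and> open U} W"
    and "x \<in> W" and "\<And>n. w n \<in> C0 le"
    and "\<And>\<phi>. \<phi> \<in> dual_space le N \<Longrightarrow> (\<lambda>n. \<phi> (w n)) \<longlonglongrightarrow> \<phi> x"
  shows "eventually (\<lambda>n. w n \<in> W) sequentially"
  using assms(1,2)
proof (induction)
  case Empty then show ?case by simp
next
  case (Int a b)
  then have "eventually (\<lambda>n. w n \<in> a) sequentially" "eventually (\<lambda>n. w n \<in> b) sequentially" by auto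
  then show ?case by eventually_elim auto
next
  case (UN K)
  then obtain k where k: "k \<in> K" "x \<in> k" by auto
  then have "eventually (\<lambda>n. w n \<in> k) sequentially" using UN.IH by blast
  then show ?case by eventually_elim (use k in auto)
next
  case (Basis s)
  then obtain \<phi> U where s: "s = {g \<in> C0 le. \<phi> g \<in> U}" "\<phi> \<in> dual_space le N" "open U" by blast
  then have "\<phi> x \<in> U" using Basis.prems by simp
  then have "eventually (\<lambda>n. \<phi> (w n) \<in> U) sequentially"
    using topological_tendstoD[OF assms(4)[OF s(2)] s(3)] by blast
  then show ?case by eventually_elim (use s assms(3) in auto)
qed



lemma dual_lin: "\<phi> \<in> dual_space le N \<Longrightarrow> f \<in> C0 le \<Longrightarrow> g \<in> C0 le \<Longrightarrow>
   \<phi> (\<lambda>s. a * f s + b * g s) = a * \<phi> f + b * \<phi> g"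
  unfolding dual_space_def by blast

lemma dual_scale: assumes "\<phi> \<in> dual_space le N" "f \<in> C0 le" shows "\<phi> (\<lambda>s. a * f s) = a * \<phi> f"
proof -
  have "\<phi> (\<lambda>s. a * f s + 0 * f s) = a * \<phi> f + 0 * \<phi> f" using dual_lin[OF assms assms(2)] .
  then show ?thesis by simp
qed

lemma dual_zero: assumes "\<phi> \<in> dual_space le N" shows "\<phi> (\<lambda>s. 0) = 0"
  using dual_scale[OF assms C0_zero, of 0] by simp

lemma dual_sum: assumes "\<phi> \<in> dual_space le N"
  shows "finite I \<Longrightarrow> (\<forall>i\<in>I. h i \<in> C0 le) \<Longrightarrow> \<phi> (\<lambda>s. \<Sum>i\<in>I. a i * h i s) = (\<Sum>i\<in>I. a i * \<phi> (h i))"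
proof (induction I rule: finite_induct)
  case empty then show ?case using dual_zero[OF assms] by simp
next
  case (insert j I)
  have "\<phi> (\<lambda>s. a j * h j s + 1 * (\<Sum>i\<in>I. a i * h i s)) = a j * \<phi> (h j) + 1 * \<phi> (\<lambda>s. \<Sum>i\<in>I. a i * h i s)"
    using insert by (intro dual_lin[OF assms] C0_sum) auto
  then show ?case using insert by simp
qed

context
  fixes le :: "'a \<Rightarrow> 'a \<Rightarrow> bool" and N :: "('a \<Rightarrow> real) \<Rightarrow> real" and c C :: real
  assumes EN: "equivalent_norm le N" and cpos: "c > 0"
    and cC: "\<forall>f\<in>C0 le. c * sup_norm f \<le> N f \<and> N f \<le> C * sup_norm f"
begin

lemma N_nonneg: "f \<in> C0 le \<Longrightarrow> 0 \<le> N f"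
  using EN unfolding equivalent_norm_def by blast

lemma N_zero: "N (\<lambda>s. 0) = 0"
  using EN C0_zero unfolding equivalent_norm_def by blast

lemma N_scale: "f \<in> C0 le \<Longrightarrow> N (\<lambda>s. a * f s) = \<bar>a\<bar> * N f"
  using EN unfolding equivalent_norm_def by blast

lemma N_tri: "f \<in> C0 le \<Longrightarrow> g \<in> C0 le \<Longrightarrow> N (\<lambda>s. f s + g s) \<le> N f + N g"
  using EN unfolding equivalent_norm_def by blast

lemma N_lower: assumes "f \<in> C0 le" shows "c * \<bar>f s\<bar> \<le> N f"
proof -
  have "c * \<bar>f s\<bar> \<le> c * sup_norm f" using sup_ge[OF assms] cpos by simp
  also have "\<dots> \<le> N f" using cC assms by blast
  finally show ?thesis .
qed

lemma N_upper: assumes "f \<in> C0 le" "\<And>s. \<bar>f s\<bar> \<le> B" shows "N f \<le> \<bar>C\<bar> * B"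
proof -
  have s0: "0 \<le> sup_norm f" using sup_ge[OF assms(1)] by (meson abs_ge_zero order_trans)
  have sB: "sup_norm f \<le> B" using sup_le assms(2) by blast
  have "N f \<le> C * sup_norm f" using cC assms by blast
  also have "\<dots> \<le> \<bar>C\<bar> * sup_norm f" using s0 by (simp add: mult_right_mono)
  also have "\<dots> \<le> \<bar>C\<bar> * B" using sB by (simp add: mult_left_mono)
  finally show ?thesis .
qed

lemma weak_null:
  assumes hC: "\<And>n. h n \<in> C0 le" and hB: "\<And>n s. \<bar>h n s\<bar> \<le> H"
    and disj: "\<And>n k s. n \<noteq> k \<Longrightarrow> h n s \<noteq> 0 \<Longrightarrow> h k s = 0"
    and phi: "\<phi> \<in> dual_space le N"
  shows "(\<lambda>n. \<phi> (h n)) \<longlonglongrightarrow> 0"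
proof -
  obtain K where K: "\<forall>f\<in>C0 le. \<bar>\<phi> f\<bar> \<le> K * N f" using phi unfolding dual_space_def by blast
  have bound: "(\<Sum>n<n0. \<bar>\<phi> (h n)\<bar>) \<le> \<bar>K\<bar> * (\<bar>C\<bar> * H)" for n0
  proof -
    define g where "g = (\<lambda>s. \<Sum>n<n0. sgn (\<phi> (h n)) * h n s)"
    have gC: "g \<in> C0 le" unfolding g_def by (rule C0_sum) (auto simp: hC)
    have "\<phi> g = (\<Sum>n<n0. sgn (\<phi> (h n)) * \<phi> (h n))" unfolding g_def
      by (rule dual_sum[OF phi]) (auto simp: hC)
    also have "\<dots> = (\<Sum>n<n0. \<bar>\<phi> (h n)\<bar>)" by (simp add: sgn_mult_self_eq abs_sgn mult.commute)
    finally have phig: "\<phi> g = (\<Sum>n<n0. \<bar>\<phi> (h n)\<bar>)" .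
    have gB: "\<bar>g s\<bar> \<le> H" for s
    proof (cases "\<exists>k<n0. h k s \<noteq> 0")
      case True
      then obtain k where k: "k < n0" "h k s \<noteq> 0" by blast
      have "g s = sgn (\<phi> (h k)) * h k s + (\<Sum>n\<in>{..<n0} - {k}. sgn (\<phi> (h n)) * h n s)"
        unfolding g_def using k(1) by (simp add: sum.remove)
      also have "(\<Sum>n\<in>{..<n0} - {k}. sgn (\<phi> (h n)) * h n s) = 0"
        using disj[of k _ s] k(2) by (intro sum.neutral) auto
      finally have "g s = sgn (\<phi> (h k)) * h k s" by simp
      then have "\<bar>g s\<bar> \<le> \<bar>h k s\<bar>" by (simp add: abs_mult abs_sgn_eq)
      then show ?thesis using hB[of k s] by linarith
    next
      case False
      then have "g s = 0" unfolding g_def by simp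
      then show ?thesis using hB[of 0 s] by simp
    qed
    have Ng: "N g \<le> \<bar>C\<bar> * H" by (rule N_upper[OF gC gB])
    have "(\<Sum>n<n0. \<bar>\<phi> (h n)\<bar>) \<le> \<bar>\<phi> g\<bar>" using phig by simp
    also have "\<dots> \<le> K * N g" using K gC by blast
    also have "\<dots> \<le> \<bar>K\<bar> * N g" using N_nonneg[OF gC] by (simp add: mult_right_mono)
    also have "\<dots> \<le> \<bar>K\<bar> * (\<bar>C\<bar> * H)" using Ng by (simp add: mult_left_mono)
    finally show ?thesis .
  qed
  have "summable (\<lambda>n. \<bar>\<phi> (h n)\<bar>)"
    by (rule summableI_nonneg_bounded[where x="\<bar>K\<bar> * (\<bar>C\<bar> * H)"]) (auto intro: bound)
  then have "(\<lambda>n. \<bar>\<phi> (h n)\<bar>) \<longlonglongrightarrow> 0" by (rule summable_LIMSEQ_zero)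
  then show ?thesis by (simp add: tendsto_rabs_zero_iff)
qed

lemma kadec_contra:
  assumes KD: "kadec le N" and eC: "e \<in> C0 le" and M: "M = N e" "M > 0"
    and hC: "\<And>n. h n \<in> C0 le" and eu: "\<And>n. e (u n) = 0" and hu: "\<And>n. h n (u n) = 1"
    and wn: "\<And>\<phi>. \<phi> \<in> dual_space le N \<Longrightarrow> (\<lambda>n. \<phi> (h n)) \<longlonglongrightarrow> 0"
    and a: "a \<longlonglongrightarrow> 1 / M"
    and bB: "eventually (\<lambda>n. \<bar>b n\<bar> \<le> Bb) sequentially"
    and ev: "eventually (\<lambda>n. N (\<lambda>s. a n * e s + b n * h n s) = 1 \<and> 1 / (M + 1) \<le> b n) sequentially"
  shows False
proof -
  define e' where "e' = (\<lambda>s. (1 / M) * e s)"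
  define Sph where "Sph = {f \<in> C0 le. N f = 1}"
  define r where "r = c / (M + 1)"
  have rpos: "r > 0" unfolding r_def using cpos M by simp
  define Ball where "Ball = {g \<in> C0 le. N (\<lambda>s. g s - e' s) < r}"
  have e'C: "e' \<in> C0 le" unfolding e'_def by (rule C0_scale[OF eC])
  have Ne': "N e' = 1"
  proof -
    have "N e' = \<bar>1 / M\<bar> * N e" unfolding e'_def by (rule N_scale[OF eC])
    then show ?thesis using M by simp
  qed
  have "openin (norm_topology le N) Ball" unfolding norm_topology_def Ball_def
    by (rule topology_generated_by_Basis) (use e'C rpos in blast)
  then have "openin (subtopology (norm_topology le N) Sph) (Ball \<inter> Sph)"
    by (auto simp: openin_subtopology)
  then have "openin (subtopology (weak_topology le N) Sph) (Ball \<inter> Sph)"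
    using KD unfolding kadec_def Sph_def by simp
  then obtain W where W: "openin (weak_topology le N) W" "Ball \<inter> Sph = W \<inter> Sph"
    by (auto simp: openin_subtopology)
  have "e' \<in> Ball"
  proof -
    have "(\<lambda>s. e' s - e' s) = (\<lambda>s. 0)" by simp
    then show ?thesis unfolding Ball_def using e'C N_zero rpos by simp
  qed
  moreover have "e' \<in> Sph" unfolding Sph_def using e'C Ne' by simp
  ultimately have e'W: "e' \<in> W" using W(2) by blast
  define w where "w = (\<lambda>n s. a n * e s + b n * h n s)"
  have wC: "w n \<in> C0 le" for n unfolding w_def by (intro C0_lin eC hC)
  have wconv: "(\<lambda>n. \<phi> (w n)) \<longlonglongrightarrow> \<phi> e'" if phi: "\<phi> \<in> dual_space le N" for \<phi>
  proof -
    have eq: "\<phi> (w n) = a n * \<phi> e + b n * \<phi> (h n)" for n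
      unfolding w_def by (rule dual_lin[OF phi eC hC])
    have "(\<lambda>n. b n * \<phi> (h n)) \<longlonglongrightarrow> 0"
    proof (rule tendsto_0_le[where K = "max Bb 1"])
      show "(\<lambda>n. \<phi> (h n)) \<longlonglongrightarrow> 0" by (rule wn[OF phi])
      show "eventually (\<lambda>n. norm (b n * \<phi> (h n)) \<le> norm (\<phi> (h n)) * max Bb 1) sequentially"
        using bB
      proof eventually_elim
        case (elim n)
        have "\<bar>b n\<bar> * \<bar>\<phi> (h n)\<bar> \<le> max Bb 1 * \<bar>\<phi> (h n)\<bar>"
          using elim by (intro mult_right_mono) auto
        then show ?case by (simp add: abs_mult mult.commute)
      qed
    qed
    moreover have "(\<lambda>n. a n * \<phi> e) \<longlonglongrightarrow> 1 / M * \<phi> e" by (intro tendsto_intros a)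
    ultimately have "(\<lambda>n. a n * \<phi> e + b n * \<phi> (h n)) \<longlonglongrightarrow> 1 / M * \<phi> e + 0" by (rule tendsto_add[rotated])
    moreover have "\<phi> e' = 1 / M * \<phi> e" unfolding e'_def by (rule dual_scale[OF phi eC])
    ultimately show ?thesis unfolding eq by simp
  qed
  have "generate_topology_on {{g \<in> C0 le. \<phi> g \<in> U} | \<phi> U. \<phi> \<in> dual_space le N \<and> open U} W"
    using W(1) unfolding weak_topology_def by (rule openin_topology_generated_by)
  then have evW: "eventually (\<lambda>n. w n \<in> W) sequentially"
    by (rule weak_eventually[OF _ e'W wC wconv])
  have "eventually (\<lambda>n. False) sequentially"
    using evW ev
  proof eventually_elim
    case (elim n)
    then have "w n \<in> Sph" unfolding Sph_def w_def using wC[of n] unfolding w_def by simp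
    then have "w n \<in> Ball" using elim W(2) by blast
    then have lt: "N (\<lambda>s. w n s - e' s) < r" unfolding Ball_def by simp
    have dC: "(\<lambda>s. w n s - e' s) \<in> C0 le" by (intro C0_diff wC e'C)
    have "c * \<bar>w n (u n) - e' (u n)\<bar> \<le> N (\<lambda>s. w n s - e' s)" by (rule N_lower[OF dC])
    moreover have "w n (u n) - e' (u n) = b n" unfolding w_def e'_def using eu hu by simp
    ultimately have "c * \<bar>b n\<bar> < c / (M + 1)" using lt unfolding r_def by simp
    then have "c * \<bar>b n\<bar> < c * (1 / (M + 1))" by simp
    then have "\<bar>b n\<bar> < 1 / (M + 1)" using mult_less_cancel_left_pos[OF cpos] by blast
    moreover have "1 / (M + 1) \<le> b n" using elim by blast
    ultimately show False by linarith
  qed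
  then show False by simp
qed

end


context
  fixes le :: "'a \<Rightarrow> 'a \<Rightarrow> bool" and N :: "('a \<Rightarrow> real) \<Rightarrow> real" and c C :: real
  assumes HT: "hausdorff_tree le" and EN: "equivalent_norm le N" and cpos: "c > 0"
    and cC: "\<forall>f\<in>C0 le. c * sup_norm f \<le> N f \<and> N f \<le> C * sup_norm f"
begin

lemma mu_bdd: "bdd_below {N (\<lambda>s. (if le s u then 1 else 0) + f' s) | f'.
       f' \<in> C0 le \<and> {s. f' s \<noteq> 0} \<subseteq> {v. lt_of le u v}}"
proof (rule bdd_belowI[of _ 0])
  fix y assume "y \<in> {N (\<lambda>s. (if le s u then 1 else 0) + f' s) | f'.
       f' \<in> C0 le \<and> {s. f' s \<noteq> 0} \<subseteq> {v. lt_of le u v}}"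
  then obtain f' where f': "f' \<in> C0 le" "y = N (\<lambda>s. (if le s u then 1 else 0) + f' s)" by blast
  have "(\<lambda>s. (if le s u then 1 else 0) + f' s) \<in> C0 le" by (intro C0_add ind_C0[OF HT] f'(1))
  then show "0 \<le> y" using f'(2) N_nonneg[OF EN cpos cC] by simp
qed

lemma mu_le: assumes "f' \<in> C0 le" "{s. f' s \<noteq> 0} \<subseteq> {v. lt_of le u v}"
  shows "mu le N u \<le> N (\<lambda>s. (if le s u then 1 else 0) + f' s)"
  unfolding mu_def
proof (rule cInf_lower)
  show "N (\<lambda>s. (if le s u then 1 else 0) + f' s) \<in> {N (\<lambda>s. (if le s u then 1 else 0) + f' s) | f'.
       f' \<in> C0 le \<and> {s. f' s \<noteq> 0} \<subseteq> {v. lt_of le u v}}" using assms by blast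
  show "bdd_below {N (\<lambda>s. (if le s u then 1 else 0) + f' s) | f'.
       f' \<in> C0 le \<and> {s. f' s \<noteq> 0} \<subseteq> {v. lt_of le u v}}" by (rule mu_bdd)
qed

lemma mu_approx: assumes "\<epsilon> > 0"
  shows "\<exists>f'. f' \<in> C0 le \<and> {s. f' s \<noteq> 0} \<subseteq> {v. lt_of le u v} \<and>
     N (\<lambda>s. (if le s u then 1 else 0) + f' s) < mu le N u + \<epsilon>"
proof -
  let ?X = "{N (\<lambda>s. (if le s u then 1 else 0) + f' s) | f'.
       f' \<in> C0 le \<and> {s. f' s \<noteq> 0} \<subseteq> {v. lt_of le u v}}"
  have "N (\<lambda>s. (if le s u then 1 else 0) + 0) \<in> ?X" using C0_zero by force
  then have ne: "?X \<noteq> {}" by blast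
  have "Inf ?X < Inf ?X + \<epsilon>" using assms by simp
  from cInf_lessD[OF ne this] show ?thesis unfolding mu_def by blast
qed

lemma succ_disj: assumes "a \<in> succs le t" "b \<in> succs le t" "le a s" "le b s" shows "a = b"
proof (rule ccontr)
  assume ne: "a \<noteq> b"
  have sa: "{x. lt_of le x a} = {x. le x t}" and sb: "{x. lt_of le x b} = {x. le x t}"
    using assms unfolding succs_def by auto
  have ta: "lt_of le t a" using sa T_refl[OF HT, of t] by blast
  have tb: "lt_of le t b" using sb T_refl[OF HT, of t] by blast
  have "le a b \<or> le b a" using T_chain[OF HT assms(3,4)] .
  then show False
  proof
    assume "le a b"
    then have "lt_of le a b" using ne unfolding lt_of_def by simp
    then have "le a t" using sb by blast
    then show False using ta T_antisym[OF HT, of a t] unfolding lt_of_def by auto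
  next
    assume "le b a"
    then have "lt_of le b a" using ne unfolding lt_of_def by simp
    then have "le b t" using sa by blast
    then show False using tb T_antisym[OF HT, of b t] unfolding lt_of_def by auto
  qed
qed

lemma no_bad:
  assumes KD: "kadec le N"
  shows "\<not> bad_point le (mu le N) t"
proof
  assume bad: "bad_point le (mu le N) t"
  define m where "m = mu le N t"
  define P where "P = (\<lambda>(n::nat) F (p :: 'a \<times> ('a \<Rightarrow> real)). fst p \<in> succs le t \<and> fst p \<notin> F \<and> snd p \<in> C0 le \<and>
      {s. snd p s \<noteq> 0} \<subseteq> {v. lt_of le (fst p) v} \<and>
      N (\<lambda>s. (if le s (fst p) then 1 else 0) + snd p s) < m + 1 / (real n + 1))"
  have pick_ex: "\<exists>p. P n F p" if finF: "finite F" for n F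
  proof -
    define \<delta> where "\<delta> = 1 / (2 * (real n + 1))"
    have \<delta>pos: "\<delta> > 0" unfolding \<delta>_def by simp
    have "\<not> good_point le (mu le N) t" using bad unfolding bad_point_def .
    then have "\<not> (INF u\<in>succs le t - (F \<inter> succs le t). ereal (mu le N u)) > ereal (mu le N t)"
      unfolding good_point_def using finF by blast
    then have "(INF u\<in>succs le t - (F \<inter> succs le t). ereal (mu le N u)) < ereal (m + \<delta>)"
    proof -
      assume "\<not> (INF u\<in>succs le t - (F \<inter> succs le t). ereal (mu le N u)) > ereal (mu le N t)"
      then have "(INF u\<in>succs le t - (F \<inter> succs le t). ereal (mu le N u)) \<le> ereal m" unfolding m_def by (simp add: not_less)
      also have "ereal m < ereal (m + \<delta>)" using \<delta>pos by simp
      finally show ?thesis .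
    qed
    then obtain u where u: "u \<in> succs le t - (F \<inter> succs le t)" "ereal (mu le N u) < ereal (m + \<delta>)"
      by (auto simp: INF_less_iff)
    obtain f' where f': "f' \<in> C0 le" "{s. f' s \<noteq> 0} \<subseteq> {v. lt_of le u v}"
      "N (\<lambda>s. (if le s u then 1 else 0) + f' s) < mu le N u + \<delta>"
      using mu_approx[OF \<delta>pos, of u] by blast
    have "mu le N u < m + \<delta>" using u(2) by simp
    then have "N (\<lambda>s. (if le s u then 1 else 0) + f' s) < m + 2 * \<delta>" using f'(3) by simp
    moreover have "2 * \<delta> = 1 / (real n + 1)" unfolding \<delta>_def by (simp add: field_simps)
    ultimately have "P n F (u, f')" unfolding P_def using u(1) f'(1,2) by auto
    then show ?thesis by blast
  qed
  define pick where "pick = (\<lambda>F n. SOME p. P n F p)"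
  have pickP: "P n F (pick F n)" if "finite F" for n F
    unfolding pick_def using someI_ex[OF pick_ex[OF that]] .
  define L where "L = rec_nat [] (\<lambda>n l. pick (fst ` set l) n # l)"
  have LS: "L (Suc n) = pick (fst ` set (L n)) n # L n" for n unfolding L_def by simp
  define p where "p = (\<lambda>n. pick (fst ` set (L n)) n)"
  have setL: "set (L n) = p ` {..<n}" for n
  proof (induction n)
    case 0 then show ?case unfolding L_def by simp
  next
    case (Suc n)
    have "L (Suc n) = p n # L n" unfolding p_def by (rule LS)
    then show ?case using Suc.IH by (simp add: lessThan_Suc)
  qed
  have Pn: "P n (fst ` set (L n)) (p n)" for n unfolding p_def by (rule pickP) simp
  define u where "u = (\<lambda>n. fst (p n))"
  define f where "f = (\<lambda>n. snd (p n))"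
  have usucc: "u n \<in> succs le t" and fC: "f n \<in> C0 le" and fsupp: "{s. f n s \<noteq> 0} \<subseteq> {v. lt_of le (u n) v}"
    and xN: "N (\<lambda>s. (if le s (u n) then 1 else 0) + f n s) < m + 1 / (real n + 1)" for n
    using Pn[of n] unfolding P_def u_def f_def by auto
  have unotin: "u n \<notin> u ` {..<n}" for n
    using Pn[of n] unfolding P_def u_def setL by (auto simp: image_image)
  have uinj: "u n \<noteq> u k" if "n \<noteq> k" for n k
  proof (cases "n < k")
    case True
    have "u n \<in> u ` {..<k}" using True by simp
    then show ?thesis using unotin[of k] by metis
  next
    case False then have "k < n" using that by simp
    then have "u k \<in> u ` {..<n}" by simp
    then show ?thesis using unotin[of n] by metis
  qed
  have succ_eq: "{s. lt_of le s (u n)} = {s. le s t}" for n using usucc[of n] unfolding succs_def by simp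
  have tu: "lt_of le t (u n)" for n using succ_eq[of n] T_refl[OF HT, of t] by blast
  have ut: "\<not> le (u n) t" for n using tu[of n] T_antisym[OF HT, of "u n" t] unfolding lt_of_def by auto
  define e where "e = (\<lambda>s. if le s t then 1 else (0::real))"
  define x where "x = (\<lambda>n s. (if le s (u n) then 1 else 0) + f n s)"
  define h where "h = (\<lambda>n s. x n s - e s)"
  have eC: "e \<in> C0 le" unfolding e_def by (rule ind_C0[OF HT])
  have xC: "x n \<in> C0 le" for n unfolding x_def by (intro C0_add ind_C0[OF HT] fC)
  have hC: "h n \<in> C0 le" for n unfolding h_def by (intro C0_diff xC eC)
  have hsupp: "le (u n) s" if "h n s \<noteq> 0" for n s
  proof (rule ccontr)
    assume nle: "\<not> le (u n) s"
    have f0: "f n s = 0"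
    proof (rule ccontr)
      assume "f n s \<noteq> 0"
      then have "lt_of le (u n) s" using fsupp[of n] by blast
      then show False using nle unfolding lt_of_def by simp
    qed
    have "h n s = 0"
    proof (cases "le s (u n)")
      case True
      then have "s \<noteq> u n" using nle T_refl[OF HT] by auto
      then have "lt_of le s (u n)" using True unfolding lt_of_def by simp
      then have "le s t" using succ_eq[of n] by blast
      then show ?thesis unfolding h_def x_def e_def using True f0 by simp
    next
      case False
      have "\<not> le s t"
      proof
        assume "le s t"
        then have "lt_of le s (u n)" using succ_eq[of n] by blast
        then show False using False unfolding lt_of_def by simp
      qed
      then show ?thesis unfolding h_def x_def e_def using False f0 by simp
    qed
    then show False using that by simp
  qed
  have eu: "e (u n) = 0" for n unfolding e_def using ut by simp
  have fu: "f n (u n) = 0" for n using fsupp[of n] unfolding lt_of_def by auto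
  have hu: "h n (u n) = 1" for n unfolding h_def x_def using eu fu T_refl[OF HT] by simp
  have disj: "h k s = 0" if "n \<noteq> k" "h n s \<noteq> 0" for n k s
  proof (rule ccontr)
    assume "h k s \<noteq> 0"
    then have "le (u k) s" "le (u n) s" using hsupp that(2) by auto
    then have "u n = u k" using succ_disj[OF usucc usucc] by blast
    then show False using uinj[OF that(1)] by simp
  qed
  have hsupp': "{s. h n s \<noteq> 0} \<subseteq> {v. lt_of le t v}" for n
  proof
    fix s assume "s \<in> {s. h n s \<noteq> 0}"
    then have us: "le (u n) s" using hsupp by blast
    have "le t s" using tu[of n] us T_trans[OF HT, of t "u n" s] unfolding lt_of_def by simp
    moreover have "s \<noteq> t" using us ut[of n] by auto
    ultimately show "s \<in> {v. lt_of le t v}" unfolding lt_of_def by auto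
  qed
  have xeh: "x n = (\<lambda>s. (if le s t then 1 else 0) + h n s)" for n unfolding h_def e_def by simp
  have mx: "m \<le> N (x n)" for n unfolding m_def xeh by (rule mu_le[OF hC hsupp'])
  have xN': "N (x n) < m + 1 / (real n + 1)" for n unfolding x_def using xN .
  define M where "M = N e"
  have mM: "m \<le> M"
  proof -
    have "m \<le> N (\<lambda>s. (if le s t then 1 else 0) + 0)" unfolding m_def by (rule mu_le) (use C0_zero in auto)
    then show ?thesis unfolding M_def e_def by simp
  qed
  have Mpos: "M > 0"
  proof -
    have "c * \<bar>e t\<bar> \<le> N e" by (rule N_lower[OF EN cpos cC eC])
    then show ?thesis unfolding M_def e_def using cpos T_refl[OF HT, of t] by simp
  qed
  define H where "H = (m + 1) / c + 1"
  have hB: "\<bar>h n s\<bar> \<le> H" for n s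
  proof -
    have "c * \<bar>x n s\<bar> \<le> N (x n)" by (rule N_lower[OF EN cpos cC xC])
    also have "\<dots> \<le> m + 1" using xN'[of n] by (smt (verit) divide_le_eq_1 of_nat_0_le_iff)
    finally have "\<bar>x n s\<bar> \<le> (m + 1) / c" using cpos by (simp add: field_simps)
    moreover have "\<bar>e s\<bar> \<le> 1" unfolding e_def by simp
    ultimately show ?thesis unfolding h_def H_def by linarith
  qed
  have wn: "(\<lambda>n. \<phi> (h n)) \<longlonglongrightarrow> 0" if "\<phi> \<in> dual_space le N" for \<phi>
    by (rule weak_null[OF EN cpos cC hC hB disj that]) auto
  have Nlin: "N (\<lambda>s. a * e s + a * h n s) = \<bar>a\<bar> * N (x n)" for a n
  proof -
    have "(\<lambda>s. a * e s + a * h n s) = (\<lambda>s. a * x n s)" unfolding h_def by (simp add: algebra_simps)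
    then show ?thesis using N_scale[OF EN cpos cC xC] by simp
  qed
  show False
  proof (cases "m < M")
    case True
    have "\<exists>n. inverse (real (Suc n)) < M - m" by (rule reals_Archimedean) (use True in simp)
    then obtain n0 :: nat where n0: "inverse (real (Suc n0)) < M - m" by blast
    have evM: "eventually (\<lambda>n. N (x n) \<le> M) sequentially"
      unfolding eventually_sequentially
    proof (intro exI allI impI)
      fix n assume "n0 \<le> n"
      then have "1 / (real n + 1) \<le> inverse (real (Suc n0))" by (simp add: field_simps)
      then show "N (x n) \<le> M" using xN'[of n] n0 by linarith
    qed
    define \<Lambda> where "\<Lambda> = max 1 (M / c)"
    define g where "g = (\<lambda>n (l::real). N (\<lambda>s. e s + l * h n s))"
    have gC: "(\<lambda>s. e s + l * h n s) \<in> C0 le" for n l by (intro C0_add C0_scale eC hC)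
    have glip: "g n l \<le> g n l' + \<bar>l - l'\<bar> * N (h n)" for n l l'
    proof -
      have "(\<lambda>s. e s + l * h n s) = (\<lambda>s. (e s + l' * h n s) + (l - l') * h n s)" by (simp add: algebra_simps)
      then have "g n l = N (\<lambda>s. (e s + l' * h n s) + (l - l') * h n s)" unfolding g_def by simp
      also have "\<dots> \<le> N (\<lambda>s. e s + l' * h n s) + N (\<lambda>s. (l - l') * h n s)"
        by (rule N_tri[OF EN cpos cC gC C0_scale[OF hC]])
      also have "N (\<lambda>s. (l - l') * h n s) = \<bar>l - l'\<bar> * N (h n)" by (rule N_scale[OF EN cpos cC hC])
      finally show ?thesis unfolding g_def by simp
    qed
    have gcont: "continuous_on {1..\<Lambda>} (g n)" for n
    proof (rule lipschitz_on_continuous_on)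
      show "(N (h n))-lipschitz_on {1..\<Lambda>} (g n)"
      proof (rule lipschitz_onI)
        fix l l' :: real
        have "g n l \<le> g n l' + \<bar>l - l'\<bar> * N (h n)" "g n l' \<le> g n l + \<bar>l' - l\<bar> * N (h n)" by (rule glip)+
        then show "dist (g n l) (g n l') \<le> N (h n) * dist l l'"
          by (simp add: dist_real_def abs_minus_commute mult.commute abs_le_iff)
      next
        show "0 \<le> N (h n)" by (rule N_nonneg[OF EN cpos cC hC])
      qed
    qed
    have lam_ex: "\<exists>l. 1 \<le> l \<and> l \<le> \<Lambda> \<and> g n l = M" if "N (x n) \<le> M" for n
    proof -
      have "g n 1 = N (x n)" unfolding g_def h_def by simp
      then have g1: "g n 1 \<le> M" using that by simp
      have "c * \<bar>e (u n) + \<Lambda> * h n (u n)\<bar> \<le> g n \<Lambda>" unfolding g_def by (rule N_lower[OF EN cpos cC gC])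
      moreover have "\<bar>e (u n) + \<Lambda> * h n (u n)\<bar> = \<Lambda>" using eu hu unfolding \<Lambda>_def by simp
      moreover have "M \<le> c * \<Lambda>" unfolding \<Lambda>_def using cpos
        by (metis max.cobounded2 mult_le_cancel_left_pos nonzero_mult_div_cancel_left order_less_irrefl times_divide_eq_right)
      ultimately have g2: "M \<le> g n \<Lambda>" by simp
      have "1 \<le> \<Lambda>" unfolding \<Lambda>_def by simp
      from IVT'[of "g n" 1 M \<Lambda>, OF g1 g2 this gcont] show ?thesis by auto
    qed
    define lam where "lam = (\<lambda>n. SOME l. 1 \<le> l \<and> l \<le> \<Lambda> \<and> g n l = M)"
    have lamP: "1 \<le> lam n \<and> lam n \<le> \<Lambda> \<and> g n (lam n) = M" if "N (x n) \<le> M" for n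
      unfolding lam_def using someI_ex[OF lam_ex[OF that]] .
    show False
    proof (rule kadec_contra[where u=u and h=h and a="\<lambda>n. 1 / M" and b="\<lambda>n. lam n / M" and Bb="\<Lambda> / M", OF EN cpos cC KD eC M_def Mpos hC eu hu wn])
      show "(\<lambda>n. 1 / M) \<longlonglongrightarrow> 1 / M" by simp
      show "eventually (\<lambda>n. \<bar>lam n / M\<bar> \<le> \<Lambda> / M) sequentially"
        using evM
      proof eventually_elim
        case (elim n) then show ?case using lamP[OF elim] Mpos by (simp add: divide_right_mono)
      qed
      show "eventually (\<lambda>n. N (\<lambda>s. 1 / M * e s + lam n / M * h n s) = 1 \<and> 1 / (M + 1) \<le> lam n / M) sequentially"
        using evM
      proof eventually_elim
        case (elim n)
        have lp: "1 \<le> lam n" "g n (lam n) = M" using lamP[OF elim] by auto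
        have eqf: "(\<lambda>s. 1 / M * e s + lam n / M * h n s) = (\<lambda>s. (1 / M) * (e s + lam n * h n s))"
          by (simp add: algebra_simps)
        have "N (\<lambda>s. 1 / M * e s + lam n / M * h n s) = \<bar>1 / M\<bar> * g n (lam n)"
          unfolding eqf g_def by (rule N_scale[OF EN cpos cC gC])
        then have "N (\<lambda>s. 1 / M * e s + lam n / M * h n s) = 1" using lp Mpos by simp
        moreover have "1 / (M + 1) \<le> lam n / M"
        proof -
          have "1 / (M + 1) \<le> 1 / M" using Mpos by (simp add: frac_le)
          also have "\<dots> \<le> lam n / M" using lp Mpos by (simp add: divide_right_mono)
          finally show ?thesis .
        qed
        ultimately show ?case by simp
      qed
    qed
  next
    case False
    then have mM': "m = M" using mM by simp
    define \<nu> where "\<nu> = (\<lambda>n. N (x n))"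
    have \<nu>lo: "M \<le> \<nu> n" for n unfolding \<nu>_def using mx mM' by simp
    have \<nu>hi: "\<nu> n \<le> M + inverse (real (Suc n))" for n
      unfolding \<nu>_def using xN'[of n] mM' by (simp add: field_simps)
    have \<nu>lim: "\<nu> \<longlonglongrightarrow> M"
      by (rule tendsto_sandwich[OF _ _ tendsto_const LIMSEQ_inverse_real_of_nat_add])
         (use \<nu>lo \<nu>hi in auto)
    have \<nu>pos: "\<nu> n > 0" for n using \<nu>lo[of n] Mpos by simp
    show False
    proof (rule kadec_contra[where u=u and h=h and a="\<lambda>n. 1 / \<nu> n" and b="\<lambda>n. 1 / \<nu> n" and Bb="1 / M", OF EN cpos cC KD eC M_def Mpos hC eu hu wn])
      show "(\<lambda>n. 1 / \<nu> n) \<longlonglongrightarrow> 1 / M" using \<nu>lim Mpos by (intro tendsto_intros) auto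
      show "eventually (\<lambda>n. \<bar>1 / \<nu> n\<bar> \<le> 1 / M) sequentially"
      proof (rule always_eventually, intro allI)
        fix n
        have "1 / \<nu> n \<le> 1 / M" using \<nu>lo[of n] Mpos by (simp add: frac_le)
        then show "\<bar>1 / \<nu> n\<bar> \<le> 1 / M" using \<nu>pos[of n] by simp
      qed
      show "eventually (\<lambda>n. N (\<lambda>s. 1 / \<nu> n * e s + 1 / \<nu> n * h n s) = 1 \<and> 1 / (M + 1) \<le> 1 / \<nu> n) sequentially"
      proof (rule always_eventually, intro allI conjI)
        fix n
        show "N (\<lambda>s. 1 / \<nu> n * e s + 1 / \<nu> n * h n s) = 1"
          unfolding Nlin using \<nu>pos[of n] unfolding \<nu>_def by simp
        have "\<nu> n \<le> M + 1" using \<nu>hi[of n] by (smt (verit) inverse_le_1_iff of_nat_0_le_iff of_nat_Suc)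
        then show "1 / (M + 1) \<le> 1 / \<nu> n" using \<nu>pos[of n] by (simp add: frac_le)
      qed
    qed
  qed
qed

end


theorem proposition3p2:
  fixes le :: "'a \<Rightarrow> 'a \<Rightarrow> bool" and N :: "('a \<Rightarrow> real) \<Rightarrow> real"
  assumes "hausdorff_tree le"
    and "equivalent_norm le N"
    and "kadec le N"
  shows "\<forall>t. \<not> bad_point le (mu le N) t"
proof (intro allI)
  fix t
  obtain c C where cC: "0 < c" "\<forall>f\<in>C0 le. c * sup_norm f \<le> N f \<and> N f \<le> C * sup_norm f"
    using assms(2) unfolding equivalent_norm_def by blast
  show "\<not> bad_point le (mu le N) t" by (rule no_bad[OF assms(1) assms(2) cC assms(3)])
qed

end
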